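(* Let $n=p_1^{m_1}\cdots p_k^{m_k}$ with $m_i>1$ for at least one $i$. Then $\mathcal E_{\mathbb Z_n}\cong K_m\vee H$, where $K_m$ is the complete graph on $m=\prod_{i=1}^k m_i-1$ vertices (the essential nonzero proper ideals) and $H=\mathscr G\big[\mathcal E_{\mathbb Z_n}([I])\big]_{I\in V(\mathscr G)}$ is the $\mathscr G$-generalized join of the edgeless graphs $\mathcal E_{\mathbb Z_n}([I])\cong\overline K_{\prod_{i\notin\Xi_I}m_i}$, with $\mathscr G\cong\mathbb{AIG}(\mathbb Z_{p_1p_2\cdots p_k})$.
   Context: Primes $p_1<\dots<p_k$, positive integers $m_i$. Nonzero proper ideals of $\mathbb Z_n$ are uniquely $\langle p_1^{r_1}\cdots p_k^{r_k}\rangle$, $0\le r_i\le m_i$, $(r_i)\ne(0,\dots,0),(m_1,\dots,m_k)$; such an ideal is essential iff $r_j\ne m_j$ for all $j$. Essential ideal graph $\mathcal E_{\mathbb Z_n}$: vertices the nonzero proper ideals, distinct $I,K$ adjacent iff $I+K$ is essential. $\mathscr U$ = nonzero proper nonessential ideals; $\Xi_I=\{i:r_i=m_i\}$; $I\preccurlyeq J$ iff $\Xi_I=\Xi_J$, class $[I]$, and $\mathcal E_{\mathbb Z_n}([I])$ the induced subgraph on $[I]$. $\mathscr G$: vertex set the $2^k-2$ ideals $\langle\prod_{i\in S}p_i^{m_i}\rangle$, $S$ nonempty proper subset of $\{1,\dots,k\}$, adjacent iff index sets disjoint. The $\mathscr G$-generalized join $\mathscr G[\Gamma_v]_{v}$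 replaces each vertex $v$ of $\mathscr G$ by $\Gamma_v$ and joins all vertices of $\Gamma_u$ to all vertices of $\Gamma_v$ when $u\sim v$. $\Gamma_1\vee\Gamma_2$ is the join. $\mathbb{AIG}(R)$: vertices nonzero ideals annihilated by some nonzero ideal, $I\sim K$ iff $IK=0$. *)

theory Defs
  imports "HOL-Number_Theory.Residues" "HOL-Algebra.Ideal_Product"
    "HOL-Computational_Algebra.Primes"
begin

type_synonym 'a graph = "'a set \<times> ('a \<Rightarrow> 'a \<Rightarrow> bool)"

definition verts :: "'a graph \<Rightarrow> 'a set" where "verts G = fst G"
definition adj :: "'a graph \<Rightarrow> 'a \<Rightarrow> 'a \<Rightarrow> bool" where "adj G = snd G"

definition graph_iso :: "'a graph \<Rightarrow> 'b graph \<Rightarrow> bool" where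
  "graph_iso G H \<longleftrightarrow> (\<exists>f. bij_betw f (verts G) (verts H) \<and>
      (\<forall>u\<in>verts G. \<forall>v\<in>verts G. adj G u v \<longleftrightarrow> adj H (f u) (f v)))"

definition complete_graph :: "nat \<Rightarrow> nat graph" where
  "complete_graph m = ({0..<m}, \<lambda>x y. x \<noteq> y)"

definition edgeless_graph :: "nat \<Rightarrow> nat graph" where
  "edgeless_graph m = ({0..<m}, \<lambda>x y. False)"

definition induced_subgraph :: "'a graph \<Rightarrow> 'a set \<Rightarrow> 'a graph" where
  "induced_subgraph G S = (S \<inter> verts G, adj G)"

definition graph_join :: "'a graph \<Rightarrow> 'b graph \<Rightarrow> ('a + 'b) graph" where
  "graph_join G H = (verts G <+> verts H,
     \<lambda>x y. case (x, y) of
        (Inl a, Inl b) \<Rightarrow> adj G a b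
      | (Inr a, Inr b) \<Rightarrow> adj H a b
      | _ \<Rightarrow> True)"

definition gen_join :: "'v graph \<Rightarrow> ('v \<Rightarrow> 'a graph) \<Rightarrow> ('v \<times> 'a) graph" where
  "gen_join G \<Gamma> = ((SIGMA v:verts G. verts (\<Gamma> v)),
     \<lambda>(u, x) (v, y). (u = v \<and> adj (\<Gamma> u) x y) \<or> (u \<noteq> v \<and> adj G u v))"

abbreviation Zn :: "nat \<Rightarrow> int ring" where "Zn n \<equiv> residue_ring (int n)"

definition nzp_ideal :: "('a, 'b) ring_scheme \<Rightarrow> 'a set \<Rightarrow> bool" where
  "nzp_ideal R I \<longleftrightarrow> ideal I R \<and> I \<noteq> {\<zero>\<^bsub>R\<^esub>} \<and> I \<noteq> carrier R"

definition essential_ideal :: "('a, 'b) ring_scheme \<Rightarrow> 'a set \<Rightarrow> bool" where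
  "essential_ideal R I \<longleftrightarrow> ideal I R \<and>
     (\<forall>J. ideal J R \<and> J \<noteq> {\<zero>\<^bsub>R\<^esub>} \<longrightarrow> I \<inter> J \<noteq> {\<zero>\<^bsub>R\<^esub>})"

definition Egraph :: "nat \<Rightarrow> int set graph" where
  "Egraph n = ({I. nzp_ideal (Zn n) I},
     \<lambda>I K. I \<noteq> K \<and> essential_ideal (Zn n) (I <+>\<^bsub>Zn n\<^esub> K))"

definition gen_ideal :: "nat \<Rightarrow> nat \<Rightarrow> int set" where
  "gen_ideal n d = PIdl\<^bsub>Zn n\<^esub> (int d mod int n)"

definition ideal_div :: "nat \<Rightarrow> int set \<Rightarrow> nat" where
  "ideal_div n I = (THE d. d dvd n \<and> I = gen_ideal n d)"

definition Xi :: "nat \<Rightarrow> int set \<Rightarrow> nat set" where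
  "Xi n I = {p \<in> prime_factors n. multiplicity p (ideal_div n I) = multiplicity p n}"

definition ideal_class :: "nat \<Rightarrow> int set \<Rightarrow> int set set" where
  "ideal_class n I = {J. nzp_ideal (Zn n) J \<and> \<not> essential_ideal (Zn n) J \<and> Xi n J = Xi n I}"

definition full_power_ideal :: "nat \<Rightarrow> nat set \<Rightarrow> int set" where
  "full_power_ideal n S = gen_ideal n (\<Prod>p\<in>S. p ^ multiplicity p n)"

definition Ggraph :: "nat \<Rightarrow> int set graph" where
  "Ggraph n = ({full_power_ideal n S | S. S \<subseteq> prime_factors n \<and> S \<noteq> {} \<and> S \<noteq> prime_factors n},
     \<lambda>I K. \<exists>S T. S \<subseteq> prime_factors n \<and> S \<noteq> {} \<and> S \<noteq> prime_factors n \<and>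
                 T \<subseteq> prime_factors n \<and> T \<noteq> {} \<and> T \<noteq> prime_factors n \<and>
                 I = full_power_ideal n S \<and> K = full_power_ideal n T \<and> S \<inter> T = {})"

definition AIG :: "('a, 'b) ring_scheme \<Rightarrow> 'a set graph" where
  "AIG R = ({I. ideal I R \<and> I \<noteq> {\<zero>\<^bsub>R\<^esub>} \<and>
               (\<exists>K. ideal K R \<and> K \<noteq> {\<zero>\<^bsub>R\<^esub>} \<and> I \<cdot>\<^bsub>R\<^esub> K = {\<zero>\<^bsub>R\<^esub>})},
     \<lambda>I K. I \<noteq> K \<and> I \<cdot>\<^bsub>R\<^esub> K = {\<zero>\<^bsub>R\<^esub>})"

end

theory Submission
  imports Defs "HOL-Library.FuncSet"
begin

definition D :: "nat \<Rightarrow> nat \<Rightarrow> int set" where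
  "D n d = {x. 0 \<le> x \<and> x < int n \<and> int d dvd x}"

lemma Zn_simps:
  "carrier (Zn n) = {0..int n - 1}" "x \<otimes>\<^bsub>Zn n\<^esub> y = (x*y) mod int n"
  "x \<oplus>\<^bsub>Zn n\<^esub> y = (x+y) mod int n" "\<zero>\<^bsub>Zn n\<^esub> = 0" "\<one>\<^bsub>Zn n\<^esub> = 1"
  by (simp_all add: residue_ring_def)

lemma cring_Zn: "n > 1 \<Longrightarrow> cring (Zn n)"
  by (rule residues.cring) (simp add: residues_def)

lemma gen_ideal_D:
  assumes "n > 1" "d dvd n"
  shows "gen_ideal n d = D n d"
proof -
  have dpos: "d > 0" using assms by (metis dvd_0_left_iff gr0I not_one_less_zero less_trans zero_less_one)
  have dd: "int d dvd int n" using assms(2) by simp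
  show ?thesis
  proof (intro subset_antisym subsetI)
    fix y assume "y \<in> gen_ideal n d"
    then obtain x where y: "y = (x * (int d mod int n)) mod int n" "x \<in> {0..int n - 1}"
      unfolding gen_ideal_def cgenideal_def Zn_simps by auto
    have "int d dvd (x * (int d mod int n))"
      using dd by (simp add: dvd_mod_iff)
    hence "int d dvd y" using dd y(1) by (simp add: dvd_mod_iff)
    moreover have "0 \<le> y" "y < int n" using y(1) assms(1) by auto
    ultimately show "y \<in> D n d" by (simp add: D_def)
  next
    fix y assume "y \<in> D n d"
    hence y: "0 \<le> y" "y < int n" "int d dvd y" by (auto simp: D_def)
    define c where "c = y div int d"
    have yc: "y = c * int d" using y(3) by (simp add: c_def)
    have "0 \<le> c" using y(1) dpos by (simp add: c_def pos_imp_zdiv_nonneg_iff)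
    moreover have "c * 1 \<le> c * int d" using \<open>0 \<le> c\<close> dpos by (intro mult_left_mono) auto
    hence "c \<le> y" using yc by simp
    ultimately have cc: "c \<in> {0..int n - 1}" using y(2) by auto
    have "(c * (int d mod int n)) mod int n = (c * int d) mod int n"
      by (simp add: mod_mult_right_eq)
    also have "\<dots> = y" using yc y by simp
    finally show "y \<in> gen_ideal n d"
      unfolding gen_ideal_def cgenideal_def Zn_simps using cc by (auto intro!: exI[of _ c])
  qed
qed

lemma ideal_gen_ideal:
  assumes "n > 1" shows "ideal (gen_ideal n d) (Zn n)"
proof -
  interpret cring "Zn n" using cring_Zn[OF assms] .
  show ?thesis unfolding gen_ideal_def
    by (rule cgenideal_ideal) (use assms in \<open>auto simp: Zn_simps\<close>)
qed

lemma ideal_D: "n > 1 \<Longrightarrow> d dvd n \<Longrightarrow> ideal (D n d) (Zn n)"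
  using ideal_gen_ideal gen_ideal_D by metis

lemma ideal_closure:
  assumes "n > 1" "ideal I (Zn n)"
  shows "\<And>c x. x \<in> I \<Longrightarrow> (c * x) mod int n \<in> I"
    and "\<And>x y. x \<in> I \<Longrightarrow> y \<in> I \<Longrightarrow> (x + y) mod int n \<in> I"
    and "0 \<in> I" and "I \<subseteq> {0..int n - 1}"
proof -
  interpret ideal I "Zn n" by fact
  show "I \<subseteq> {0..int n - 1}" using Icarr Zn_simps(1) by blast
  fix c x assume x: "x \<in> I"
  have cc: "c mod int n \<in> carrier (Zn n)" using assms(1) by (simp add: Zn_simps)
  have "(c mod int n) \<otimes>\<^bsub>Zn n\<^esub> x \<in> I" by (rule I_l_closed[OF x cc])
  thus "(c * x) mod int n \<in> I" by (simp add: Zn_simps mod_mult_left_eq)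
next
  interpret ideal I "Zn n" by fact
  fix x y assume "x \<in> I" "y \<in> I"
  hence "x \<oplus>\<^bsub>Zn n\<^esub> y \<in> I" by (rule additive_subgroup.a_closed[OF is_additive_subgroup])
  thus "(x + y) mod int n \<in> I" by (simp add: Zn_simps)
next
  interpret ideal I "Zn n" by fact
  show "0 \<in> I" using additive_subgroup.zero_closed[OF is_additive_subgroup] by (simp add: Zn_simps)
qed

lemma ideal_is_D:
  assumes n: "n > 1" and I: "ideal I (Zn n)"
  shows "\<exists>d. d dvd n \<and> I = D n d"
proof -
  note cl = ideal_closure[OF n I]
  define A where "A = {x\<in>I. x > 0} \<union> {int n}"
  have finA: "finite A" using cl(4) unfolding A_def by (auto intro: finite_subset)
  define g where "g = Min A"
  have gA: "g \<in> A" using finA unfolding g_def A_def by (intro Min_in) auto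
  have gle: "\<And>x. x \<in> A \<Longrightarrow> g \<le> x" using finA unfolding g_def by auto
  have gpos: "g > 0" using gA n unfolding A_def by auto
  have gn: "g \<le> int n" using gle unfolding A_def by auto
  have gI: "g < int n \<Longrightarrow> g \<in> I" using gA unfolding A_def by auto
  have small: "\<And>r. r \<in> I \<Longrightarrow> 0 \<le> r \<Longrightarrow> r < g \<Longrightarrow> r = 0"
  proof (rule ccontr)
    fix r assume "r \<in> I" "0 \<le> r" "r < g" "r \<noteq> 0"
    hence "r \<in> A" unfolding A_def by auto
    thus False using gle \<open>r < g\<close> by fastforce
  qed
  have dvdI: "g dvd x" if x: "x \<in> I" for x
  proof (cases "g = int n")
    case True
    have "0 \<le> x" "x < int n" using cl(4) x by auto
    thus ?thesis using small[OF x] True by auto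
  next
    case False
    hence g: "g \<in> I" "g < int n" using gI gn by auto
    define r where "r = x mod g"
    have "((- (x div g)) * g) mod int n \<in> I" using cl(1)[OF g(1)] .
    from cl(2)[OF x this] have "(x + (- (x div g)) * g) mod int n \<in> I" by (simp only: mod_add_right_eq)
    also have "x + (- (x div g)) * g = r" unfolding r_def by (simp add: minus_div_mult_eq_mod [symmetric])
    also have "r mod int n = r" using gpos g(2) unfolding r_def
      by (intro mod_pos_pos_trivial) (auto intro: order.strict_trans[OF pos_mod_bound])
    finally have "r \<in> I" .
    hence "r = 0" using small gpos unfolding r_def by auto
    thus ?thesis unfolding r_def by auto
  qed
  have gdvdn: "g dvd int n"
  proof (cases "g = int n")
    case False
    hence g: "g \<in> I" "g < int n" using gI gn by auto
    define r where "r = int n mod g"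
    have "((- (int n div g)) * g) mod int n \<in> I" using cl(1)[OF g(1)] .
    also have "((- (int n div g)) * g) mod int n = (int n + (- (int n div g)) * g) mod int n"
      by simp
    also have "int n + (- (int n div g)) * g = r" unfolding r_def by (simp add: minus_div_mult_eq_mod [symmetric])
    also have "r mod int n = r" using gpos g(2) unfolding r_def
      by (intro mod_pos_pos_trivial) (auto intro: order.strict_trans[OF pos_mod_bound])
    finally have "r \<in> I" .
    hence "r = 0" using small gpos unfolding r_def by auto
    thus ?thesis unfolding r_def by auto
  qed simp
  define d where "d = nat g"
  have gd: "g = int d" using gpos unfolding d_def by simp
  have "d dvd n" using gdvdn gd by simp
  moreover have "I = D n d"
  proof (intro subset_antisym subsetI)
    fix x assume "x \<in> I" thus "x \<in> D n d" using dvdI[of x] cl(4) gd by (auto simp: D_def)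
  next
    fix y assume "y \<in> D n d"
    hence y: "0 \<le> y" "y < int n" "g dvd y" using gd by (auto simp: D_def)
    show "y \<in> I"
    proof (cases "g = int n")
      case True thus ?thesis using y cl(3) by (metis zdvd_not_zless dvd_0_right order_le_less)
    next
      case False
      hence g: "g \<in> I" using gI gn by auto
      obtain c where "y = g * c" using y(3) by auto
      hence "y = (c * g) mod int n" using y by (simp add: mult.commute)
      thus ?thesis using cl(1)[OF g] by simp
    qed
  qed
  ultimately show ?thesis by blast
qed

lemma D_mem: "d dvd n \<Longrightarrow> n > 0 \<Longrightarrow> int d mod int n \<in> D n d"
  by (auto simp: D_def dvd_mod_iff)

lemma D_sub_iff:
  assumes "n > 0" "d dvd n" "e dvd n"
  shows "D n d \<subseteq> D n e \<longleftrightarrow> e dvd d"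
proof
  assume "e dvd d" thus "D n d \<subseteq> D n e" by (auto simp: D_def intro: dvd_trans)
next
  assume sub: "D n d \<subseteq> D n e"
  have "int d mod int n \<in> D n e" using D_mem[OF assms(2,1)] sub by auto
  hence "int e dvd int d mod int n" by (simp add: D_def)
  hence "int e dvd int d" using assms(3) by (simp add: dvd_mod_iff)
  thus "e dvd d" by simp
qed

lemma D_inj:
  assumes "n > 0" "d dvd n" "e dvd n" "D n d = D n e" shows "d = e"
  using D_sub_iff[OF assms(1-3)] D_sub_iff[OF assms(1,3,2)] assms(4) by (simp add: dvd_antisym)

lemma D_n: "n > 0 \<Longrightarrow> D n n = {0}"
  unfolding D_def using zdvd_not_zless[of _ "int n"] by (auto simp: order_le_less)

lemma D_zero_iff:
  assumes "n > 0" "d dvd n" shows "D n d = {0} \<longleftrightarrow> d = n"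
  using D_inj[OF assms(1,2) dvd_refl] D_n[OF assms(1)] by auto

lemma D_one: "D n 1 = carrier (Zn n)"
  by (auto simp: D_def Zn_simps)

lemma D_inter: "D n d \<inter> D n e = D n (lcm d e)"
  by (auto simp: D_def lcm_least_iff simp flip: lcm_int_int_eq)

lemma ideal_div_gen:
  assumes "n > 1" "d dvd n" shows "ideal_div n (gen_ideal n d) = d"
  unfolding ideal_div_def
proof (rule the_equality)
  show "d dvd n \<and> gen_ideal n d = gen_ideal n d" using assms by simp
  fix e assume "e dvd n \<and> gen_ideal n d = gen_ideal n e"
  thus "e = d" using D_inj[of n e d] gen_ideal_D assms by auto
qed

lemma D_sum:
  assumes n: "n > 1" and d: "d dvd n" and e: "e dvd n"
  shows "D n d <+>\<^bsub>Zn n\<^esub> D n e = D n (gcd d e)"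
proof (intro subset_antisym subsetI)
  fix z assume "z \<in> D n d <+>\<^bsub>Zn n\<^esub> D n e"
  then obtain x y where xy: "x \<in> D n d" "y \<in> D n e" "z = (x + y) mod int n"
    unfolding set_add_def' by (auto simp: Zn_simps)
  have g: "int (gcd d e) dvd x" "int (gcd d e) dvd y" "int (gcd d e) dvd int n"
    using xy d by (auto simp: D_def intro: dvd_trans[of _ "int d"] dvd_trans[of _ "int e"])
  hence "int (gcd d e) dvd z" using xy(3) by (simp add: dvd_mod_iff)
  moreover have "0 \<le> z" "z < int n" using xy(3) n by auto
  ultimately show "z \<in> D n (gcd d e)" by (simp add: D_def)
next
  fix z assume "z \<in> D n (gcd d e)"
  hence z: "0 \<le> z" "z < int n" "int (gcd d e) dvd z" by (auto simp: D_def)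
  obtain c where c: "z = int (gcd d e) * c" using z(3) by auto
  obtain a b where ab: "int (gcd d e) = a * int d + b * int e"
    using bezout_int[of "int d" "int e"] by (metis gcd_int_int_eq)
  define x where "x = (c * a * int d) mod int n"
  define y where "y = (c * b * int e) mod int n"
  have "x \<in> D n d" using d n unfolding x_def D_def by (auto simp: dvd_mod_iff)
  moreover have "y \<in> D n e" using e n unfolding y_def D_def by (auto simp: dvd_mod_iff)
  moreover have "z = (x + y) mod int n"
  proof -
    have "(x + y) mod int n = (c * a * int d + c * b * int e) mod int n"
      unfolding x_def y_def by (simp add: mod_add_eq)
    also have "c * a * int d + c * b * int e = z" using c ab by (simp add: algebra_simps)
    finally show ?thesis using z by simp
  qed
  ultimately show "z \<in> D n d <+>\<^bsub>Zn n\<^esub> D n e"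
    unfolding set_add_def' by (auto simp: Zn_simps)
qed

lemma D_prod_zero:
  assumes n: "n > 1" and d: "d dvd n" and e: "e dvd n"
  shows "D n d \<cdot>\<^bsub>Zn n\<^esub> D n e = {0} \<longleftrightarrow> n dvd d * e"
proof
  assume h: "D n d \<cdot>\<^bsub>Zn n\<^esub> D n e = {0}"
  have "(int d mod int n) \<otimes>\<^bsub>Zn n\<^esub> (int e mod int n) \<in> D n d \<cdot>\<^bsub>Zn n\<^esub> D n e"
    using D_mem d e n by (intro ideal_prod.prod) auto
  hence "((int d mod int n) * (int e mod int n)) mod int n = 0" using h by (simp add: Zn_simps)
  hence "(int d * int e) mod int n = 0" by (simp add: mod_mult_eq)
  hence "int n dvd int (d * e)" by (simp add: dvd_eq_mod_eq_0)
  thus "n dvd d * e" by (simp only: of_nat_dvd_iff)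
next
  assume h: "n dvd d * e"
  have "s = 0" if "s \<in> D n d \<cdot>\<^bsub>Zn n\<^esub> D n e" for s
    using that
  proof (induct s rule: ideal_prod.induct)
    case (prod i j)
    then obtain a b where "i = int d * a" "j = int e * b" by (auto simp: D_def elim!: dvdE)
    hence "i * j = int (d * e) * (a * b)" by (simp add: algebra_simps)
    hence "int n dvd i * j" using h by (metis dvd_mult2 of_nat_dvd_iff)
    thus ?case by (simp add: Zn_simps)
  next
    case (sum s1 s2) thus ?case by (simp add: Zn_simps)
  qed
  moreover have "0 \<in> D n d \<cdot>\<^bsub>Zn n\<^esub> D n e"
  proof -
    have "0 \<in> D n d" "0 \<in> D n e" using n by (auto simp: D_def)
    from ideal_prod.prod[OF this, of "Zn n"] show ?thesis by (simp add: Zn_simps)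
  qed
  ultimately show "D n d \<cdot>\<^bsub>Zn n\<^esub> D n e = {0}" by auto
qed

lemma ideals_Zn: "n > 1 \<Longrightarrow> ideal I (Zn n) \<longleftrightarrow> (\<exists>d. d dvd n \<and> I = D n d)"
  using ideal_is_D ideal_D by blast

lemma essential_D_iff:
  assumes n: "n > 1" and d: "d dvd n"
  shows "essential_ideal (Zn n) (D n d) \<longleftrightarrow> (\<forall>e. e dvd n \<and> e \<noteq> n \<longrightarrow> lcm d e \<noteq> n)"
proof -
  have "essential_ideal (Zn n) (D n d) \<longleftrightarrow> (\<forall>J. ideal J (Zn n) \<and> J \<noteq> {0} \<longrightarrow> D n d \<inter> J \<noteq> {0})"
    using ideal_D[OF n d] by (simp add: essential_ideal_def Zn_simps)
  also have "\<dots> \<longleftrightarrow> (\<forall>e. e dvd n \<and> D n e \<noteq> {0} \<longrightarrow> D n (lcm d e) \<noteq> {0})"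
    using ideals_Zn[OF n] D_inter by metis
  also have "\<dots> \<longleftrightarrow> (\<forall>e. e dvd n \<and> e \<noteq> n \<longrightarrow> lcm d e \<noteq> n)"
    using D_zero_iff n d by (metis lcm_least less_trans zero_less_one)
  finally show ?thesis .
qed

lemma mult_div_prime:
  fixes n p q :: nat
  assumes n: "n > 0" and p: "prime p" "p dvd n" and q: "prime q"
  shows "multiplicity q (n div p) = (if q = p then multiplicity p n - 1 else multiplicity q n)"
proof -
  have np: "n = p * (n div p)" using p(2) by simp
  have nz: "n div p \<noteq> 0"
  proof
    assume "n div p = 0" hence "n = 0" using np by simp
    thus False using n by simp
  qed
  have "multiplicity q n = multiplicity q p + multiplicity q (n div p)"
    using prime_elem_multiplicity_mult_distrib[of q p "n div p"] q p nz np
    by (metis prime_imp_prime_elem prime_gt_0_nat neq0_conv)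
  moreover have "multiplicity q p = (if q = p then 1 else 0)"
    using p q by (auto simp: prime_multiplicity_other)
  ultimately show ?thesis by auto
qed

lemma dvd_div_prime_iff:
  fixes n p d :: nat
  assumes n: "n > 0" and p: "prime p" "p dvd n" and d: "d dvd n"
  shows "d dvd n div p \<longleftrightarrow> multiplicity p d < multiplicity p n"
proof -
  have mpos: "multiplicity p n > 0" using p n by (simp add: prime_multiplicity_gt_zero_iff)
  have dnz: "d \<noteq> 0" using d n by auto
  have nz: "n div p \<noteq> 0" using n p prime_gt_0_nat[of p] by (auto elim!: dvdE)
  show ?thesis
  proof
    assume "d dvd n div p"
    hence "multiplicity p d \<le> multiplicity p (n div p)" using nz by (rule dvd_imp_multiplicity_le)
    thus "multiplicity p d < multiplicity p n" using mult_div_prime[OF n p p(1)] mpos by simp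
  next
    assume lt: "multiplicity p d < multiplicity p n"
    show "d dvd n div p"
    proof (rule multiplicity_le_imp_dvd[OF dnz])
      fix q :: nat assume q: "prime q"
      show "multiplicity q d \<le> multiplicity q (n div p)"
        using mult_div_prime[OF n p q] lt dvd_imp_multiplicity_le[OF d] n by auto
    qed
  qed
qed

lemma mult_le_n: "d dvd (n::nat) \<Longrightarrow> n > 0 \<Longrightarrow> multiplicity p d \<le> multiplicity p n"
  by (rule dvd_imp_multiplicity_le) auto

lemma ess_mult_iff:
  fixes n d :: nat
  assumes n: "n > 0" and d: "d dvd n"
  shows "(\<forall>e. e dvd n \<and> e \<noteq> n \<longrightarrow> lcm d e \<noteq> n) \<longleftrightarrow>
         (\<forall>p\<in>prime_factors n. multiplicity p d < multiplicity p n)"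
proof
  assume H: "\<forall>e. e dvd n \<and> e \<noteq> n \<longrightarrow> lcm d e \<noteq> n"
  show "\<forall>p\<in>prime_factors n. multiplicity p d < multiplicity p n"
  proof (rule ballI, rule ccontr)
    fix p assume pP: "p \<in> prime_factors n" and nl: "\<not> multiplicity p d < multiplicity p n"
    have p: "prime p" "p dvd n" using pP by auto
    define e where "e = n div p"
    have ed: "e dvd n" unfolding e_def using p(2) prime_gt_0_nat[OF p(1)] by (auto elim!: dvdE)
    have "e < n" unfolding e_def using n prime_gt_1_nat[OF p(1)] by (intro div_less_dividend) auto
    hence en: "e \<noteq> n" by simp
    have l1: "lcm d e dvd n" using d ed by simp
    have lnz: "lcm d e \<noteq> 0" using d ed n by (auto simp: lcm_eq_0_iff)
    have "n dvd lcm d e"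
    proof (rule multiplicity_le_imp_dvd)
      show "n \<noteq> 0" using n by simp
      fix q :: nat assume q: "prime q"
      show "multiplicity q n \<le> multiplicity q (lcm d e)"
      proof (cases "q = p")
        case True
        hence "multiplicity q n \<le> multiplicity q d" using nl by simp
        also have "\<dots> \<le> multiplicity q (lcm d e)" by (rule dvd_imp_multiplicity_le[OF _ lnz]) simp
        finally show ?thesis .
      next
        case False
        hence "multiplicity q n = multiplicity q e" using mult_div_prime[OF n p q] unfolding e_def by simp
        also have "\<dots> \<le> multiplicity q (lcm d e)" by (rule dvd_imp_multiplicity_le[OF _ lnz]) simp
        finally show ?thesis .
      qed
    qed
    hence "lcm d e = n" using l1 by (simp add: dvd_antisym)
    thus False using H ed en by blast
  qed
next
  assume H: "\<forall>p\<in>prime_factors n. multiplicity p d < multiplicity p n"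
  show "\<forall>e. e dvd n \<and> e \<noteq> n \<longrightarrow> lcm d e \<noteq> n"
  proof (intro allI impI)
    fix e assume e: "e dvd n \<and> e \<noteq> n"
    have "\<exists>p. prime p \<and> multiplicity p e < multiplicity p n"
    proof (rule ccontr)
      assume "\<not> ?thesis"
      hence "n dvd e" using n by (intro multiplicity_le_imp_dvd) (auto simp: not_less)
      thus False using e dvd_antisym[of n e] by blast
    qed
    then obtain p where p: "prime p" "multiplicity p e < multiplicity p n" by blast
    have "multiplicity p n > 0" using p by simp
    hence pn: "p dvd n" using prime_multiplicity_gt_zero_iff[of p n] p n by (simp add: prime_imp_prime_elem)
    have pP: "p \<in> prime_factors n" using pn p n by (auto simp: in_prime_factors_iff)
    have "d dvd n div p" using dvd_div_prime_iff[OF n p(1) pn d] H pP by auto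
    moreover have "e dvd n div p" using dvd_div_prime_iff[OF n p(1) pn] e p by auto
    ultimately have "lcm d e dvd n div p" by simp
    moreover have "n div p < n" using n p(1) prime_gt_1_nat by (simp add: div_less_dividend)
    moreover have "n div p > 0" using n pn p(1) prime_gt_0_nat by (auto elim!: dvdE)
    ultimately show "lcm d e \<noteq> n" using dvd_imp_le[of n "n div p"] by auto
  qed
qed

lemma mult_gcd_lt_iff:
  fixes n d e p :: nat
  assumes n: "n > 0" and d: "d dvd n" and e: "e dvd n" and p: "prime p"
  shows "multiplicity p (gcd d e) < multiplicity p n \<longleftrightarrow>
         multiplicity p d < multiplicity p n \<or> multiplicity p e < multiplicity p n"
proof -
  have dz: "d \<noteq> 0" "e \<noteq> 0" using d e n by auto
  have gz: "gcd d e \<noteq> 0" using dz by simp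
  have a: "multiplicity p (gcd d e) \<le> multiplicity p d" "multiplicity p (gcd d e) \<le> multiplicity p e"
    using dz by (auto intro: dvd_imp_multiplicity_le)
  have b: "multiplicity p d \<le> multiplicity p n" "multiplicity p e \<le> multiplicity p n"
    using d e n by (auto intro: dvd_imp_multiplicity_le)
  have c: "multiplicity p n \<le> multiplicity p (gcd d e)"
    if "multiplicity p d = multiplicity p n" "multiplicity p e = multiplicity p n"
  proof -
    have "p ^ multiplicity p n dvd d" "p ^ multiplicity p n dvd e"
      using that multiplicity_dvd[of p d] multiplicity_dvd[of p e] by auto
    hence "p ^ multiplicity p n dvd gcd d e" by simp
    thus ?thesis using gz p by (intro multiplicity_geI) (auto simp: prime_gt_1_nat)
  qed
  show ?thesis using a b c by (cases "multiplicity p d = multiplicity p n"; cases "multiplicity p e = multiplicity p n") auto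
qed

lemma divisor_eqI:
  fixes n d d' :: nat
  assumes n: "n > 0" and d: "d dvd n" and d': "d' dvd n"
    and eq: "\<And>p. p \<in> prime_factors n \<Longrightarrow> multiplicity p d = multiplicity p d'"
  shows "d = d'"
proof (rule multiplicity_eq_nat)
  show "d > 0" "d' > 0" using n d d' by (auto intro: Nat.gr0I)
  fix q :: nat assume q: "prime q"
  show "multiplicity q d = multiplicity q d'"
  proof (cases "q dvd n")
    case True thus ?thesis using eq q n by (auto simp: in_prime_factors_iff)
  next
    case False
    hence "\<not> q dvd d" "\<not> q dvd d'" using d d' dvd_trans by blast+
    thus ?thesis by (simp add: not_dvd_imp_multiplicity_0)
  qed
qed

lemma prod_pow_props:
  fixes n :: nat and r :: "nat \<Rightarrow> nat"
  assumes n: "n > 0" and r: "\<And>p. p \<in> prime_factors n \<Longrightarrow> r p \<le> multiplicity p n"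
  shows "(\<Prod>p\<in>prime_factors n. p ^ r p) dvd n"
    and "\<And>q. q \<in> prime_factors n \<Longrightarrow> multiplicity q (\<Prod>p\<in>prime_factors n. p ^ r p) = r q"
proof -
  have "(\<Prod>p\<in>prime_factors n. p ^ r p) dvd (\<Prod>p\<in>prime_factors n. p ^ multiplicity p n)"
    by (intro prod_dvd_prod le_imp_power_dvd r)
  thus "(\<Prod>p\<in>prime_factors n. p ^ r p) dvd n" using prime_factorization_nat[OF n] by simp
  fix q assume "q \<in> prime_factors n"
  thus "multiplicity q (\<Prod>p\<in>prime_factors n. p ^ r p) = r q"
    by (subst multiplicity_prod_prime_powers) auto
qed

lemma count_bij:
  fixes n :: nat and A :: "nat \<Rightarrow> nat set"
  assumes n: "n > 0" and A: "\<And>p. p \<in> prime_factors n \<Longrightarrow> A p \<subseteq> {0..multiplicity p n}"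
  shows "bij_betw (\<lambda>d. restrict (\<lambda>p. multiplicity p d) (prime_factors n))
           {d. d dvd n \<and> (\<forall>p\<in>prime_factors n. multiplicity p d \<in> A p)} (PiE (prime_factors n) A)"
  unfolding bij_betw_def
proof (intro conjI)
  let ?P = "prime_factors n"
  show "inj_on (\<lambda>d. restrict (\<lambda>p. multiplicity p d) ?P) {d. d dvd n \<and> (\<forall>p\<in>?P. multiplicity p d \<in> A p)}"
  proof (rule inj_onI)
    fix d d' assume "d \<in> {d. d dvd n \<and> (\<forall>p\<in>?P. multiplicity p d \<in> A p)}"
      "d' \<in> {d. d dvd n \<and> (\<forall>p\<in>?P. multiplicity p d \<in> A p)}"
      and eq: "restrict (\<lambda>p. multiplicity p d) ?P = restrict (\<lambda>p. multiplicity p d') ?P"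
    moreover have "\<And>p. p \<in> ?P \<Longrightarrow> multiplicity p d = multiplicity p d'"
      using eq by (metis restrict_apply')
    ultimately show "d = d'" using divisor_eqI[OF n] by auto
  qed
  show "(\<lambda>d. restrict (\<lambda>p. multiplicity p d) ?P) ` {d. d dvd n \<and> (\<forall>p\<in>?P. multiplicity p d \<in> A p)} = PiE ?P A"
  proof (intro subset_antisym subsetI)
    fix f assume "f \<in> (\<lambda>d. restrict (\<lambda>p. multiplicity p d) ?P) ` {d. d dvd n \<and> (\<forall>p\<in>?P. multiplicity p d \<in> A p)}"
    thus "f \<in> PiE ?P A" by auto
  next
    fix f assume f: "f \<in> PiE ?P A"
    define d where "d = (\<Prod>p\<in>?P. p ^ f p)"
    have fle: "\<And>p. p \<in> ?P \<Longrightarrow> f p \<le> multiplicity p n"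
    proof -
      fix p assume p: "p \<in> ?P" thus "f p \<le> multiplicity p n" using A[OF p] PiE_mem[OF f p] by auto
    qed
    note pp = prod_pow_props[OF n fle]
    have dd: "d dvd n" unfolding d_def by (rule pp(1))
    have md: "\<And>p. p \<in> ?P \<Longrightarrow> multiplicity p d = f p" unfolding d_def by (rule pp(2))
    have "restrict (\<lambda>p. multiplicity p d) ?P = restrict f ?P"
      using md by (intro restrict_ext) simp
    also have "\<dots> = f" using f by (rule PiE_restrict)
    finally have rf: "restrict (\<lambda>p. multiplicity p d) ?P = f" .
    have dm: "d \<in> {d. d dvd n \<and> (\<forall>p\<in>?P. multiplicity p d \<in> A p)}"
      using dd md PiE_mem[OF f] by auto
    show "f \<in> (\<lambda>d. restrict (\<lambda>p. multiplicity p d) ?P) ` {d. d dvd n \<and> (\<forall>p\<in>?P. multiplicity p d \<in> A p)}"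
      using image_eqI[where f="\<lambda>d. restrict (\<lambda>p. multiplicity p d) ?P", OF sym[OF rf] dm] .
  qed
qed

lemma count_divs:
  fixes n :: nat and A :: "nat \<Rightarrow> nat set"
  assumes n: "n > 0" and A: "\<And>p. p \<in> prime_factors n \<Longrightarrow> A p \<subseteq> {0..multiplicity p n}"
  shows "card {d. d dvd n \<and> (\<forall>p\<in>prime_factors n. multiplicity p d \<in> A p)} = (\<Prod>p\<in>prime_factors n. card (A p))"
  using bij_betw_same_card[OF count_bij[OF n A]] by (simp add: card_PiE)

lemma gen_inj:
  assumes "n > 1" "d dvd n" "e dvd n" "gen_ideal n d = gen_ideal n e" shows "d = e"
  using D_inj[of n d e] gen_ideal_D assms by auto

lemma nzp_iff:
  assumes n: "n > 1"
  shows "nzp_ideal (Zn n) I \<longleftrightarrow> (\<exists>d. d dvd n \<and> d \<noteq> 1 \<and> d \<noteq> n \<and> I = gen_ideal n d)"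
proof -
  have "nzp_ideal (Zn n) I \<longleftrightarrow> (\<exists>d. d dvd n \<and> I = D n d) \<and> I \<noteq> {0} \<and> I \<noteq> D n 1"
    unfolding nzp_ideal_def ideals_Zn[OF n] Zn_simps(4) D_one[of n, symmetric] by (rule refl)
  also have "\<dots> \<longleftrightarrow> (\<exists>d. d dvd n \<and> d \<noteq> 1 \<and> d \<noteq> n \<and> I = D n d)"
  proof
    assume "(\<exists>d. d dvd n \<and> I = D n d) \<and> I \<noteq> {0} \<and> I \<noteq> D n 1"
    then obtain d where d: "d dvd n" "I = D n d" "I \<noteq> {0}" "I \<noteq> D n 1" by blast
    have "d \<noteq> n" using d D_zero_iff[of n d] n by auto
    moreover have "d \<noteq> 1" using d by auto
    ultimately show "\<exists>d. d dvd n \<and> d \<noteq> 1 \<and> d \<noteq> n \<and> I = D n d" using d by blast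
  next
    assume "\<exists>d. d dvd n \<and> d \<noteq> 1 \<and> d \<noteq> n \<and> I = D n d"
    then obtain d where d: "d dvd n" "d \<noteq> 1" "d \<noteq> n" "I = D n d" by blast
    have "I \<noteq> {0}" using d D_zero_iff[of n d] n by auto
    moreover have "I \<noteq> D n 1" using d D_inj[of n d 1] n by auto
    ultimately show "(\<exists>d. d dvd n \<and> I = D n d) \<and> I \<noteq> {0} \<and> I \<noteq> D n 1" using d by blast
  qed
  finally show ?thesis using gen_ideal_D[OF n] by auto
qed

lemma ess_gen:
  assumes n: "n > 1" and d: "d dvd n"
  shows "essential_ideal (Zn n) (gen_ideal n d) \<longleftrightarrow>
         (\<forall>p\<in>prime_factors n. multiplicity p d < multiplicity p n)"
  using essential_D_iff[OF n d] ess_mult_iff[OF _ d] n gen_ideal_D[OF n d] by simp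

lemma Xi_gen:
  assumes n: "n > 1" and d: "d dvd n"
  shows "Xi n (gen_ideal n d) = {p\<in>prime_factors n. multiplicity p d = multiplicity p n}"
  unfolding Xi_def ideal_div_gen[OF n d] ..

lemma sum_gen:
  assumes n: "n > 1" and d: "d dvd n" and e: "e dvd n"
  shows "gen_ideal n d <+>\<^bsub>Zn n\<^esub> gen_ideal n e = gen_ideal n (gcd d e)"
proof -
  have g: "gcd d e dvd n" using d by (meson dvd_trans gcd_dvd1)
  show ?thesis using D_sum[OF n d e] gen_ideal_D[OF n d] gen_ideal_D[OF n e] gen_ideal_D[OF n g] by simp
qed

lemma adj_Egraph_gen:
  assumes n: "n > 1" and d: "d dvd n" and e: "e dvd n"
  shows "adj (Egraph n) (gen_ideal n d) (gen_ideal n e) \<longleftrightarrow> gen_ideal n d \<noteq> gen_ideal n e \<and>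
     (\<forall>p\<in>prime_factors n. multiplicity p d < multiplicity p n \<or> multiplicity p e < multiplicity p n)"
proof -
  have g: "gcd d e dvd n" using d by (meson dvd_trans gcd_dvd1)
  show ?thesis
    unfolding Egraph_def adj_def snd_conv sum_gen[OF n d e] ess_gen[OF n g]
    using mult_gcd_lt_iff[OF _ d e] n by auto
qed

lemma verts_Egraph: "verts (Egraph n) = {I. nzp_ideal (Zn n) I}"
  by (simp add: Egraph_def verts_def)

definition dS :: "nat \<Rightarrow> nat set \<Rightarrow> nat" where
  "dS n S = (\<Prod>p\<in>S. p ^ multiplicity p n)"

lemma dS_props:
  assumes n: "n > 0" and S: "S \<subseteq> prime_factors n"
  shows "dS n S dvd n" and "\<And>p. prime p \<Longrightarrow> multiplicity p (dS n S) = (if p \<in> S then multiplicity p n else 0)"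
proof -
  have "dS n S dvd (\<Prod>p\<in>prime_factors n. p ^ multiplicity p n)"
    unfolding dS_def by (rule prod_dvd_prod_subset[OF _ S]) simp
  thus "dS n S dvd n" using prime_factorization_nat[OF n] by simp
  have fS: "finite S" using S finite_subset by blast
  fix p :: nat assume "prime p"
  thus "multiplicity p (dS n S) = (if p \<in> S then multiplicity p n else 0)"
    unfolding dS_def using S fS by (subst multiplicity_prod_prime_powers) auto
qed

lemma fpi_eq: "full_power_ideal n S = gen_ideal n (dS n S)"
  by (simp add: full_power_ideal_def dS_def)

lemma mult_pos_P: "p \<in> prime_factors (n::nat) \<Longrightarrow> multiplicity p n > 0"
  by (auto simp: in_prime_factors_iff prime_multiplicity_gt_zero_iff prime_imp_prime_elem)

lemma Xi_fpi:
  assumes n: "n > 1" and S: "S \<subseteq> prime_factors n"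
  shows "Xi n (full_power_ideal n S) = S"
proof -
  have n0: "n > 0" using n by simp
  have "(multiplicity p (dS n S) = multiplicity p n) = (p \<in> S)" if p: "p \<in> prime_factors n" for p
  proof -
    have "prime p" "multiplicity p n > 0" using p mult_pos_P by auto
    thus ?thesis using dS_props(2)[OF n0 S \<open>prime p\<close>] by auto
  qed
  thus ?thesis unfolding fpi_eq Xi_gen[OF n dS_props(1)[OF n0 S]] using S by auto
qed

lemma fpi_inj:
  assumes n: "n > 1" and "S \<subseteq> prime_factors n" "T \<subseteq> prime_factors n"
    and "full_power_ideal n S = full_power_ideal n T" shows "S = T"
proof -
  have "S = Xi n (full_power_ideal n S)" using Xi_fpi[OF n assms(2)] by simp
  also have "\<dots> = Xi n (full_power_ideal n T)" using assms(4) by (rule arg_cong)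
  also have "\<dots> = T" using Xi_fpi[OF n assms(3)] .
  finally show ?thesis .
qed

lemma adj_Ggraph:
  assumes n: "n > 1"
    and S: "S \<subseteq> prime_factors n" "S \<noteq> {}" "S \<noteq> prime_factors n"
    and T: "T \<subseteq> prime_factors n" "T \<noteq> {}" "T \<noteq> prime_factors n"
  shows "adj (Ggraph n) (full_power_ideal n S) (full_power_ideal n T) \<longleftrightarrow> S \<inter> T = {}"
proof
  assume "adj (Ggraph n) (full_power_ideal n S) (full_power_ideal n T)"
  then obtain S' T' where h: "S' \<subseteq> prime_factors n" "T' \<subseteq> prime_factors n"
    "full_power_ideal n S = full_power_ideal n S'" "full_power_ideal n T = full_power_ideal n T'"
    "S' \<inter> T' = {}" unfolding Ggraph_def adj_def snd_conv by blast
  have "S = S'" by (rule fpi_inj[OF n S(1) h(1) h(3)])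
  moreover have "T = T'" by (rule fpi_inj[OF n T(1) h(2) h(4)])
  ultimately show "S \<inter> T = {}" using h(5) by simp
next
  assume "S \<inter> T = {}" thus "adj (Ggraph n) (full_power_ideal n S) (full_power_ideal n T)"
    unfolding Ggraph_def adj_def snd_conv using S T by blast
qed

lemma verts_Ggraph: "verts (Ggraph n) = full_power_ideal n ` {S. S \<subseteq> prime_factors n \<and> S \<noteq> {} \<and> S \<noteq> prime_factors n}"
  unfolding Ggraph_def verts_def fst_conv by blast

lemma graph_simps:
  "verts (graph_join G H) = verts G <+> verts H"
  "adj (graph_join G H) (Inl a) (Inl b) = adj G a b"
  "adj (graph_join G H) (Inr a') (Inr b') = adj H a' b'"
  "adj (graph_join G H) (Inl a) (Inr b') = True"
  "adj (graph_join G H) (Inr a') (Inl b) = True"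
  "verts (gen_join G \<Gamma>) = Sigma (verts G) (\<lambda>v. verts (\<Gamma> v))"
  "adj (gen_join G \<Gamma>) (u, x) (v, y) = ((u = v \<and> adj (\<Gamma> u) x y) \<or> (u \<noteq> v \<and> adj G u v))"
  "verts (induced_subgraph G S) = S \<inter> verts G"
  "adj (induced_subgraph G S) = adj G"
  "verts (complete_graph k) = {0..<k}"
  "adj (complete_graph k) i j = (i \<noteq> j)"
  "verts (edgeless_graph k) = {0..<k}"
  "adj (edgeless_graph k) i j = False"
  by (simp_all add: graph_join_def gen_join_def induced_subgraph_def complete_graph_def
      edgeless_graph_def verts_def adj_def)

context
  fixes n :: nat
  assumes n: "n > 1"
begin

abbreviation "PF \<equiv> prime_factors n"
abbreviation "mm p \<equiv> multiplicity p n"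

lemma n0: "n > 0" using n by simp

lemma PF_ne: "PF \<noteq> {}"
  using n by (metis prime_factors_dvd less_numeral_extra(4) n0 prime_factor_nat empty_iff mem_Collect_eq
      neq0_conv not_less_iff_gr_or_eq)

lemma mult_le: "d dvd n \<Longrightarrow> multiplicity p d \<le> mm p"
  using mult_le_n n0 by blast

lemma Xi_N:
  assumes d: "d dvd n" "d \<noteq> n" and ne: "\<not> (\<forall>p\<in>PF. multiplicity p d < mm p)"
  shows "Xi n (gen_ideal n d) \<subseteq> PF" "Xi n (gen_ideal n d) \<noteq> {}" "Xi n (gen_ideal n d) \<noteq> PF"
proof -
  note X = Xi_gen[OF n d(1)]
  show "Xi n (gen_ideal n d) \<subseteq> PF" unfolding X by auto
  from ne obtain p where "p \<in> PF" "\<not> multiplicity p d < mm p" by blast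
  hence "p \<in> Xi n (gen_ideal n d)" unfolding X using mult_le[OF d(1), of p] by auto
  thus "Xi n (gen_ideal n d) \<noteq> {}" by auto
  show "Xi n (gen_ideal n d) \<noteq> PF"
  proof
    assume "Xi n (gen_ideal n d) = PF"
    hence "\<And>p. p \<in> PF \<Longrightarrow> multiplicity p d = multiplicity p n" unfolding X by auto
    hence "d = n" using divisor_eqI[OF n0 d(1) dvd_refl] by blast
    thus False using d by simp
  qed
qed

lemma adj_N:
  assumes d: "d dvd n" "d \<noteq> n" and nd: "\<not> (\<forall>p\<in>PF. multiplicity p d < mm p)"
    and e: "e dvd n" "e \<noteq> n" and ne: "\<not> (\<forall>p\<in>PF. multiplicity p e < mm p)"
  shows "adj (Egraph n) (gen_ideal n d) (gen_ideal n e) \<longleftrightarrow>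
         Xi n (gen_ideal n d) \<inter> Xi n (gen_ideal n e) = {}"
proof -
  have iff: "(\<forall>p\<in>PF. multiplicity p d < mm p \<or> multiplicity p e < mm p) \<longleftrightarrow>
         Xi n (gen_ideal n d) \<inter> Xi n (gen_ideal n e) = {}"
    unfolding Xi_gen[OF n d(1)] Xi_gen[OF n e(1)] using mult_le[OF d(1)] mult_le[OF e(1)]
    by (auto simp: order_le_less)
  have "Xi n (gen_ideal n d) \<inter> Xi n (gen_ideal n e) = {} \<Longrightarrow> gen_ideal n d \<noteq> gen_ideal n e"
    using Xi_N(2)[OF d nd] by auto
  thus ?thesis unfolding adj_Egraph_gen[OF n d(1) e(1)] iff by blast
qed

lemma adj_E:
  assumes d: "d dvd n" and ed: "\<forall>p\<in>PF. multiplicity p d < mm p" and e: "e dvd n"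
  shows "adj (Egraph n) (gen_ideal n d) (gen_ideal n e) \<longleftrightarrow> gen_ideal n d \<noteq> gen_ideal n e"
        "adj (Egraph n) (gen_ideal n e) (gen_ideal n d) \<longleftrightarrow> gen_ideal n d \<noteq> gen_ideal n e"
  unfolding adj_Egraph_gen[OF n d e] adj_Egraph_gen[OF n e d] using ed by auto

end

context
  fixes n :: nat
  assumes n: "n > 1"
begin

lemma nzpD: "nzp_ideal (Zn n) I \<Longrightarrow> \<exists>d. d dvd n \<and> d \<noteq> 1 \<and> d \<noteq> n \<and> I = gen_ideal n d"
  using nzp_iff[OF n] by blast

lemma card_Ess:
  "card {I. nzp_ideal (Zn n) I \<and> essential_ideal (Zn n) I} =
     (\<Prod>p\<in>prime_factors n. multiplicity p n) - 1 \<and>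
   finite {I. nzp_ideal (Zn n) I \<and> essential_ideal (Zn n) I}"
    (is "card ?E = _ \<and> _")
proof -
  define Ed where "Ed = {d. d dvd n \<and> (\<forall>p\<in>prime_factors n. multiplicity p d \<in> {0..<multiplicity p n})}"
  have finEd: "finite Ed" unfolding Ed_def using n by (auto intro: finite_subset[OF _ finite_divisors_nat])
  have "card Ed = (\<Prod>p\<in>prime_factors n. card {0..<multiplicity p n})"
    unfolding Ed_def by (rule count_divs[OF n0[OF n]]) auto
  hence cEd: "card Ed = (\<Prod>p\<in>prime_factors n. multiplicity p n)" by simp
  have oneEd: "1 \<in> Ed" unfolding Ed_def using mult_pos_P by auto
  obtain p0 where p0: "p0 \<in> prime_factors n" using PF_ne[OF n] by blast
  have E: "?E = gen_ideal n ` (Ed - {1})"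
  proof (intro subset_antisym subsetI)
    fix I assume "I \<in> ?E"
    then obtain d where d: "d dvd n" "d \<noteq> 1" "d \<noteq> n" "I = gen_ideal n d" "essential_ideal (Zn n) I"
      using nzpD by blast
    hence "d \<in> Ed - {1}" unfolding Ed_def using ess_gen[OF n d(1)] by auto
    thus "I \<in> gen_ideal n ` (Ed - {1})" using d by blast
  next
    fix I assume "I \<in> gen_ideal n ` (Ed - {1})"
    then obtain d where d: "d \<in> Ed" "d \<noteq> 1" "I = gen_ideal n d" by blast
    have dd: "d dvd n" using d unfolding Ed_def by auto
    have "multiplicity p0 d < multiplicity p0 n" using d p0 unfolding Ed_def by auto
    hence "d \<noteq> n" by auto
    hence "nzp_ideal (Zn n) I" using nzp_iff[OF n] dd d by blast
    moreover have "essential_ideal (Zn n) I" using d ess_gen[OF n dd] unfolding Ed_def by auto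
    ultimately show "I \<in> ?E" by simp
  qed
  have inj: "inj_on (gen_ideal n) (Ed - {1})"
    by (rule inj_onI) (use gen_inj[OF n] in \<open>auto simp: Ed_def\<close>)
  show ?thesis
    unfolding E card_image[OF inj] using finEd oneEd cEd by simp
qed

lemma iso1:
  "graph_iso (Egraph n)
           (graph_join (complete_graph ((\<Prod>p\<in>prime_factors n. multiplicity p n) - 1))
              (gen_join (Ggraph n) (\<lambda>I. induced_subgraph (Egraph n) (ideal_class n I))))"
proof -
  let ?M = "(\<Prod>p\<in>prime_factors n. multiplicity p n) - 1"
  let ?E = "{I. nzp_ideal (Zn n) I \<and> essential_ideal (Zn n) I}"
  let ?V = "verts (Egraph n)"
  let ?F = "\<lambda>I. full_power_ideal n (Xi n I)"
  obtain h where h: "bij_betw h ?E {0..<?M}"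
    using finite_same_card_bij[of ?E "{0..<?M}"] card_Ess by auto
  define f where "f I = (if essential_ideal (Zn n) I then Inl (h I) else Inr (?F I, I))" for I
  have Vd: "\<And>I. I \<in> ?V \<Longrightarrow> \<exists>d. d dvd n \<and> d \<noteq> 1 \<and> d \<noteq> n \<and> I = gen_ideal n d"
    using nzpD unfolding verts_Egraph by blast
  have NX: "Xi n I \<subseteq> prime_factors n \<and> Xi n I \<noteq> {} \<and> Xi n I \<noteq> prime_factors n"
    if IV: "I \<in> ?V" and IE: "\<not> essential_ideal (Zn n) I" for I
  proof -
    obtain d where d: "d dvd n" "d \<noteq> n" "I = gen_ideal n d" using Vd[OF IV] by blast
    have "\<not> (\<forall>p\<in>prime_factors n. multiplicity p d < multiplicity p n)"
      using IE ess_gen[OF n d(1)] d(3) by simp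
    from Xi_N[OF n d(1,2) this] show ?thesis using d(3) by simp
  qed
  have NG: "?F I \<in> verts (Ggraph n)" if "I \<in> ?V" "\<not> essential_ideal (Zn n) I" for I
    using NX[OF that] unfolding verts_Ggraph by blast
  have NXF: "Xi n (?F I) = Xi n I" if "I \<in> ?V" "\<not> essential_ideal (Zn n) I" for I
    using NX[OF that] Xi_fpi[OF n] by blast
  have NC: "I \<in> ideal_class n (?F I)" if "I \<in> ?V" "\<not> essential_ideal (Zn n) I" for I
    using that NXF[OF that] unfolding ideal_class_def verts_Egraph by simp
  have inj: "inj_on f ?V"
  proof (rule inj_onI)
    fix I J assume I: "I \<in> ?V" and J: "J \<in> ?V" and eq: "f I = f J"
    show "I = J"
    proof (cases "essential_ideal (Zn n) I")
      case True
      hence J': "essential_ideal (Zn n) J" using eq unfolding f_def by (auto split: if_splits)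
      have "h I = h J" using eq True J' unfolding f_def by simp
      moreover have "I \<in> ?E" "J \<in> ?E" using I J True J' unfolding verts_Egraph by auto
      ultimately show ?thesis using h unfolding bij_betw_def inj_on_def by blast
    next
      case False
      hence J': "\<not> essential_ideal (Zn n) J" using eq unfolding f_def by (auto split: if_splits)
      show ?thesis using eq False J' unfolding f_def by simp
    qed
  qed
  have img: "f ` ?V = {0..<?M} <+> Sigma (verts (Ggraph n)) (\<lambda>v. ideal_class n v \<inter> ?V)"
  proof (intro subset_antisym subsetI)
    fix x assume "x \<in> f ` ?V"
    then obtain I where I: "I \<in> ?V" "x = f I" by blast
    show "x \<in> {0..<?M} <+> Sigma (verts (Ggraph n)) (\<lambda>v. ideal_class n v \<inter> ?V)"
    proof (cases "essential_ideal (Zn n) I")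
      case True
      hence "I \<in> ?E" using I unfolding verts_Egraph by auto
      hence "h I \<in> {0..<?M}" using h unfolding bij_betw_def by blast
      thus ?thesis using I True unfolding f_def by auto
    next
      case False
      thus ?thesis using I NG[OF I(1) False] NC[OF I(1) False] unfolding f_def by auto
    qed
  next
    fix x assume x: "x \<in> {0..<?M} <+> Sigma (verts (Ggraph n)) (\<lambda>v. ideal_class n v \<inter> ?V)"
    show "x \<in> f ` ?V"
    proof (cases x)
      case (Inl k)
      hence "k \<in> {0..<?M}" using x by auto
      then obtain I where "I \<in> ?E" "k = h I" using h unfolding bij_betw_def by blast
      hence "I \<in> ?V" "x = f I" using Inl unfolding f_def verts_Egraph by auto
      thus ?thesis by blast
    next
      case (Inr y)
      then obtain v J where y: "x = Inr (v, J)" "v \<in> verts (Ggraph n)" "J \<in> ideal_class n v" "J \<in> ?V"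
        using x by (cases y) auto
      obtain S where S: "v = full_power_ideal n S" "S \<subseteq> prime_factors n" using y(2) unfolding verts_Ggraph by blast
      have J: "\<not> essential_ideal (Zn n) J" "Xi n J = Xi n v" using y(3) unfolding ideal_class_def by auto
      have "Xi n v = S" using S Xi_fpi[OF n] by simp
      hence "?F J = v" using J S by simp
      hence "x = f J" using y J unfolding f_def by simp
      thus ?thesis using y(4) by blast
    qed
  qed
  have adjp: "adj (Egraph n) I J \<longleftrightarrow>
      adj (graph_join (complete_graph ?M) (gen_join (Ggraph n) (\<lambda>I. induced_subgraph (Egraph n) (ideal_class n I)))) (f I) (f J)"
    if I: "I \<in> ?V" and J: "J \<in> ?V" for I J
  proof -
    obtain d where d: "d dvd n" "d \<noteq> n" "I = gen_ideal n d" using Vd[OF I] by blast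
    obtain e where e: "e dvd n" "e \<noteq> n" "J = gen_ideal n e" using Vd[OF J] by blast
    note essd = ess_gen[OF n d(1)] and esse = ess_gen[OF n e(1)]
    show ?thesis
    proof (cases "essential_ideal (Zn n) I"; cases "essential_ideal (Zn n) J")
      assume a: "essential_ideal (Zn n) I" "essential_ideal (Zn n) J"
      have "I \<in> ?E" "J \<in> ?E" using a I J unfolding verts_Egraph by auto
      hence "h I = h J \<longleftrightarrow> I = J" using h unfolding bij_betw_def inj_on_def by blast
      moreover have "adj (Egraph n) I J \<longleftrightarrow> I \<noteq> J" using adj_E(1)[OF n d(1) _ e(1)] essd a d(3) e(3) by simp
      ultimately show ?thesis using a by (simp add: f_def graph_simps)
    next
      assume a: "essential_ideal (Zn n) I" "\<not> essential_ideal (Zn n) J"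
      moreover have "adj (Egraph n) I J" using adj_E(1)[OF n d(1) _ e(1)] essd a d(3) e(3) by auto
      ultimately show ?thesis by (simp add: f_def graph_simps)
    next
      assume a: "\<not> essential_ideal (Zn n) I" "essential_ideal (Zn n) J"
      moreover have "adj (Egraph n) I J" using adj_E(2)[OF n e(1) _ d(1)] esse a d(3) e(3) by auto
      ultimately show ?thesis by (simp add: f_def graph_simps)
    next
      assume a: "\<not> essential_ideal (Zn n) I" "\<not> essential_ideal (Zn n) J"
      have nd: "\<not> (\<forall>p\<in>prime_factors n. multiplicity p d < multiplicity p n)" using a essd d(3) by simp
      have ne: "\<not> (\<forall>p\<in>prime_factors n. multiplicity p e < multiplicity p n)" using a esse e(3) by simp
      have A: "adj (Egraph n) I J \<longleftrightarrow> Xi n I \<inter> Xi n J = {}"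
        using adj_N[OF n d(1,2) nd e(1,2) ne] d(3) e(3) by simp
      have B: "adj (Ggraph n) (?F I) (?F J) \<longleftrightarrow> Xi n I \<inter> Xi n J = {}"
        using adj_Ggraph[OF n] NX[OF I a(1)] NX[OF J a(2)] by simp
      show ?thesis using a A B by (auto simp add: f_def graph_simps)
    qed
  qed
  show ?thesis unfolding graph_iso_def
    by (intro exI[of _ f] conjI ballI adjp)
       (simp_all add: bij_betw_def inj img graph_simps)
qed

end

context
  fixes n :: nat
  assumes n: "n > 1"
begin

lemma class_eq:
  assumes S: "S \<subseteq> prime_factors n" "S \<noteq> {}" "S \<noteq> prime_factors n"
  defines "Cd \<equiv> {d. d dvd n \<and> (\<forall>p\<in>prime_factors n. multiplicity p d \<in>
                 (if p \<in> S then {multiplicity p n} else {0..<multiplicity p n}))}"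
  shows "ideal_class n (full_power_ideal n S) = gen_ideal n ` Cd"
proof (intro subset_antisym subsetI)
  have XS: "Xi n (full_power_ideal n S) = S" using Xi_fpi[OF n S(1)] .
  fix J assume "J \<in> ideal_class n (full_power_ideal n S)"
  hence J: "nzp_ideal (Zn n) J" "Xi n J = S" unfolding ideal_class_def XS by auto
  then obtain d where d: "d dvd n" "J = gen_ideal n d" using nzp_iff[OF n] by blast
  have "\<forall>p\<in>prime_factors n. multiplicity p d \<in>
                 (if p \<in> S then {multiplicity p n} else {0..<multiplicity p n})"
    using J(2) unfolding d(2) Xi_gen[OF n d(1)] using mult_le[OF n d(1)] by (auto simp: order_le_less)
  thus "J \<in> gen_ideal n ` Cd" using d unfolding Cd_def by blast
next
  have XS: "Xi n (full_power_ideal n S) = S" using Xi_fpi[OF n S(1)] .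
  fix J assume "J \<in> gen_ideal n ` Cd"
  then obtain d where d: "d dvd n" "J = gen_ideal n d"
    and md: "\<forall>p\<in>prime_factors n. multiplicity p d \<in>
                 (if p \<in> S then {multiplicity p n} else {0..<multiplicity p n})"
    unfolding Cd_def by blast
  obtain p1 where p1: "p1 \<in> S" using S(2) by blast
  obtain p2 where p2: "p2 \<in> prime_factors n" "p2 \<notin> S" using S(1,3) by blast
  have "multiplicity p2 d < multiplicity p2 n" using md p2 by auto
  hence dn: "d \<noteq> n" by auto
  have p1P: "p1 \<in> prime_factors n" using p1 S(1) by blast
  have mp1: "multiplicity p1 d = multiplicity p1 n" using md[rule_format, OF p1P] p1 by simp
  moreover have "multiplicity p1 n > 0" using mult_pos_P[OF p1P] .
  ultimately have d1: "d \<noteq> 1" by auto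
  have nz: "nzp_ideal (Zn n) J" using nzp_iff[OF n] d dn d1 by blast
  have "\<not> essential_ideal (Zn n) J" using ess_gen[OF n d(1)] d(2) mp1 p1P by auto
  moreover have "Xi n J = S"
  proof -
    have eqS: "(multiplicity p d = multiplicity p n) = (p \<in> S)" if p: "p \<in> prime_factors n" for p
      using md[rule_format, OF p] by (cases "p \<in> S") auto
    show ?thesis unfolding d(2) Xi_gen[OF n d(1)] using eqS S(1) by blast
  qed
  ultimately show "J \<in> ideal_class n (full_power_ideal n S)"
    unfolding ideal_class_def XS using nz by simp
qed

lemma iso2:
  "\<forall>I\<in>verts (Ggraph n).
            graph_iso (induced_subgraph (Egraph n) (ideal_class n I))
              (edgeless_graph (\<Prod>p\<in>prime_factors n - Xi n I. multiplicity p n))"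
proof
  fix I assume "I \<in> verts (Ggraph n)"
  then obtain S where S: "S \<subseteq> prime_factors n" "S \<noteq> {}" "S \<noteq> prime_factors n"
    and I: "I = full_power_ideal n S" unfolding verts_Ggraph by blast
  have XS: "Xi n I = S" using Xi_fpi[OF n S(1)] I by simp
  define Cd where "Cd = {d. d dvd n \<and> (\<forall>p\<in>prime_factors n. multiplicity p d \<in>
                 (if p \<in> S then {multiplicity p n} else {0..<multiplicity p n}))}"
  have C: "ideal_class n I = gen_ideal n ` Cd" unfolding I Cd_def by (rule class_eq[OF S])
  have finCd: "finite Cd" unfolding Cd_def using n by (auto intro: finite_subset[OF _ finite_divisors_nat])
  have inj: "inj_on (gen_ideal n) Cd"
    by (rule inj_onI) (use gen_inj[OF n] in \<open>auto simp: Cd_def\<close>)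
  have "card Cd = (\<Prod>p\<in>prime_factors n. card (if p \<in> S then {multiplicity p n} else {0..<multiplicity p n}))"
    unfolding Cd_def by (rule count_divs[OF n0[OF n]]) auto
  also have "\<dots> = (\<Prod>p\<in>prime_factors n. if p \<in> S then 1 else multiplicity p n)"
    by (intro prod.cong) auto
  also have "\<dots> = (\<Prod>p\<in>prime_factors n - S. multiplicity p n)"
    by (subst prod.If_cases) (auto simp: Diff_eq)
  finally have cC: "card (ideal_class n I) = (\<Prod>p\<in>prime_factors n - Xi n I. multiplicity p n)"
    unfolding C card_image[OF inj] XS .
  have finC: "finite (ideal_class n I)" unfolding C using finCd by simp
  obtain g where g: "bij_betw g (ideal_class n I) {0..<(\<Prod>p\<in>prime_factors n - Xi n I. multiplicity p n)}"
    using finite_same_card_bij[OF finC, of "{0..<(\<Prod>p\<in>prime_factors n - Xi n I. multiplicity p n)}"] cC by auto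
  have V: "ideal_class n I \<inter> verts (Egraph n) = ideal_class n I"
    unfolding ideal_class_def verts_Egraph by auto
  have noadj: "\<not> adj (Egraph n) J K" if J: "J \<in> ideal_class n I" and K: "K \<in> ideal_class n I" for J K
  proof -
    have J': "nzp_ideal (Zn n) J" "\<not> essential_ideal (Zn n) J" "Xi n J = S"
      and K': "nzp_ideal (Zn n) K" "\<not> essential_ideal (Zn n) K" "Xi n K = S"
      using J K XS unfolding ideal_class_def by auto
    obtain d where d: "d dvd n" "d \<noteq> n" "J = gen_ideal n d" using nzp_iff[OF n] J'(1) by blast
    obtain e where e: "e dvd n" "e \<noteq> n" "K = gen_ideal n e" using nzp_iff[OF n] K'(1) by blast
    have nd: "\<not> (\<forall>p\<in>prime_factors n. multiplicity p d < multiplicity p n)"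
      using J'(2) ess_gen[OF n d(1)] d(3) by simp
    have ne: "\<not> (\<forall>p\<in>prime_factors n. multiplicity p e < multiplicity p n)"
      using K'(2) ess_gen[OF n e(1)] e(3) by simp
    show ?thesis using adj_N[OF n d(1,2) nd e(1,2) ne] d(3) e(3) J'(3) K'(3) S(2) by simp
  qed
  show "graph_iso (induced_subgraph (Egraph n) (ideal_class n I))
              (edgeless_graph (\<Prod>p\<in>prime_factors n - Xi n I. multiplicity p n))"
    unfolding graph_iso_def graph_simps V using g noadj by blast
qed

end

lemma AIG_simps: "verts (AIG R) = {I. ideal I R \<and> I \<noteq> {\<zero>\<^bsub>R\<^esub>} \<and>
               (\<exists>K. ideal K R \<and> K \<noteq> {\<zero>\<^bsub>R\<^esub>} \<and> I \<cdot>\<^bsub>R\<^esub> K = {\<zero>\<^bsub>R\<^esub>})}"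
  "adj (AIG R) I K = (I \<noteq> K \<and> I \<cdot>\<^bsub>R\<^esub> K = {\<zero>\<^bsub>R\<^esub>})"
  by (simp_all add: AIG_def verts_def adj_def)

lemma gen_prod_zero:
  assumes "q > 1" "a dvd q" "b dvd q"
  shows "gen_ideal q a \<cdot>\<^bsub>Zn q\<^esub> gen_ideal q b = {\<zero>\<^bsub>Zn q\<^esub>} \<longleftrightarrow> q dvd a * b"
  using D_prod_zero[OF assms] gen_ideal_D[OF assms(1,2)] gen_ideal_D[OF assms(1,3)] by (simp add: Zn_simps)

context
  fixes n :: nat
  assumes n: "n > 1"
begin

definition "qq = \<Prod>(prime_factors n)"

lemma prod_primes_mult:
  assumes T: "T \<subseteq> prime_factors n" and r: "prime r"
  shows "multiplicity r (\<Prod>T) = (if r \<in> T then 1 else 0)"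
proof -
  have fT: "finite T" using T finite_subset by blast
  have "\<Prod>T = (\<Prod>p\<in>T. p ^ (1::nat))" by simp
  moreover have pT: "\<And>x. x \<in> T \<Longrightarrow> prime x" using T by auto
  ultimately show ?thesis using multiplicity_prod_prime_powers[OF fT pT r, of "\<lambda>_. 1"] by simp
qed

lemma prod_posP: assumes "T \<subseteq> prime_factors n" shows "\<Prod>T > 0"
proof (rule prod_pos)
  fix a assume "a \<in> T" hence "prime a" using assms by auto
  thus "0 < a" by (rule prime_gt_0_nat)
qed

lemma prod_inj:
  assumes A: "A \<subseteq> prime_factors n" and B: "B \<subseteq> prime_factors n" and eq: "\<Prod>A = \<Prod>B"
  shows "A = B"
proof -
  have *: "r \<in> A \<longleftrightarrow> r \<in> B" if "r \<in> prime_factors n" for r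
  proof -
    have "prime r" using that by auto
    have m1: "multiplicity r (\<Prod>A) = (if r \<in> A then 1 else 0)" using prod_primes_mult[OF A \<open>prime r\<close>] .
    have m2: "multiplicity r (\<Prod>B) = (if r \<in> B then 1 else 0)" using prod_primes_mult[OF B \<open>prime r\<close>] .
    have "(if r \<in> A then 1 else 0) = (if r \<in> B then (1::nat) else 0)" using m1 m2 eq by metis
    thus ?thesis by (cases "r \<in> A"; cases "r \<in> B") simp_all
  qed
  show ?thesis
  proof (intro subset_antisym subsetI)
    fix r assume "r \<in> A" thus "r \<in> B" using * A by blast
  next
    fix r assume "r \<in> B" thus "r \<in> A" using * B by blast
  qed
qed

lemma qq_gt1: "qq > 1"
proof -
  obtain p where p: "p \<in> prime_factors n" using PF_ne[OF n] by blast
  have "qq > 0" unfolding qq_def by (rule prod_posP) simp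
  moreover have "p dvd qq" unfolding qq_def using dvd_prodI[of "prime_factors n" p "\<lambda>x. x"] p by simp
  moreover have "p > 1" using p prime_gt_1_nat by auto
  ultimately show ?thesis using dvd_imp_le[of p qq] by linarith
qed

lemma prod_dvd_qq: "T \<subseteq> prime_factors n \<Longrightarrow> \<Prod>T dvd qq"
  unfolding qq_def by (rule prod_dvd_prod_subset) auto

lemma dvd_qq_prod:
  assumes e: "e dvd qq" shows "\<exists>T. T \<subseteq> prime_factors n \<and> e = \<Prod>T"
proof -
  define T where "T = {p\<in>prime_factors n. p dvd e}"
  have T: "T \<subseteq> prime_factors n" unfolding T_def by auto
  have e0: "e > 0" using e qq_gt1 by (auto intro: Nat.gr0I)
  have "e = \<Prod>T"
  proof (rule multiplicity_eq_nat[OF e0 prod_posP[OF T]])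
    fix r :: nat assume r: "prime r"
    show "multiplicity r e = multiplicity r (\<Prod>T)"
    proof (cases "r \<in> prime_factors n")
      case True
      have "multiplicity r e \<le> multiplicity r qq" using e qq_gt1 by (intro dvd_imp_multiplicity_le) auto
      also have "multiplicity r qq = 1" unfolding qq_def using prod_primes_mult[of "prime_factors n" r] True r by simp
      finally have le1: "multiplicity r e \<le> 1" .
      have "multiplicity r e > 0 \<longleftrightarrow> r dvd e" using r e0 prime_multiplicity_gt_zero_iff[of r e]
        by (simp add: prime_imp_prime_elem)
      hence "multiplicity r e = (if r \<in> T then 1 else 0)" using le1 True unfolding T_def by auto
      thus ?thesis using prod_primes_mult[OF T r] by simp
    next
      case False
      have "\<not> r dvd e"
      proof
        assume "r dvd e"
        hence "r dvd \<Prod>(prime_factors n)" using e unfolding qq_def by (rule dvd_trans)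
        then obtain p where "p \<in> prime_factors n" "r dvd p" using prime_dvd_prod_iff[OF _ r, of "prime_factors n" "\<lambda>x. x"] by auto
        hence "r = p" using r primes_dvd_imp_eq by auto
        thus False using False \<open>p \<in> prime_factors n\<close> by simp
      qed
      moreover have "r \<notin> T" using False T by auto
      ultimately show ?thesis using prod_primes_mult[OF T r] by (simp add: not_dvd_imp_multiplicity_0)
    qed
  qed
  thus ?thesis using T by blast
qed

lemma qq_dvd_iff:
  assumes A: "A \<subseteq> prime_factors n" and B: "B \<subseteq> prime_factors n"
  shows "qq dvd \<Prod>A * \<Prod>B \<longleftrightarrow> prime_factors n \<subseteq> A \<union> B"
proof
  assume h: "qq dvd \<Prod>A * \<Prod>B"
  show "prime_factors n \<subseteq> A \<union> B"
  proof
    fix p assume p: "p \<in> prime_factors n"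
    have pr: "prime p" using p by auto
    have "p dvd qq" unfolding qq_def using dvd_prodI[of "prime_factors n" p "\<lambda>x. x"] p by simp
    hence "p dvd \<Prod>A * \<Prod>B" using h by (rule dvd_trans)
    hence "p dvd \<Prod>A \<or> p dvd \<Prod>B" using pr prime_dvd_mult_iff by blast
    moreover have "p dvd \<Prod>C \<Longrightarrow> C \<subseteq> prime_factors n \<Longrightarrow> p \<in> C" for C
    proof -
      assume "p dvd \<Prod>C" "C \<subseteq> prime_factors n"
      moreover have "finite C" using \<open>C \<subseteq> prime_factors n\<close> finite_subset by blast
      ultimately obtain c where "c \<in> C" "p dvd c" using prime_dvd_prod_iff[OF _ pr, of C "\<lambda>x. x"] by auto
      moreover have "prime c" using \<open>c \<in> C\<close> \<open>C \<subseteq> prime_factors n\<close> by auto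
      ultimately show "p \<in> C" using primes_dvd_imp_eq[OF pr] by blast
    qed
    ultimately show "p \<in> A \<union> B" using A B by blast
  qed
next
  assume h: "prime_factors n \<subseteq> A \<union> B"
  have fA: "finite A" "finite B" using A B finite_subset by blast+
  have "A \<union> B = prime_factors n" using h A B by blast
  hence "\<Prod>A * \<Prod>B = qq * \<Prod>(A \<inter> B)" unfolding qq_def using prod.union_inter[OF fA, of "\<lambda>x. x"] by simp
  thus "qq dvd \<Prod>A * \<Prod>B" by simp
qed

lemma gen_qq_zero: "e dvd qq \<Longrightarrow> gen_ideal qq e = {\<zero>\<^bsub>Zn qq\<^esub>} \<longleftrightarrow> e = qq"
  using gen_ideal_D[OF qq_gt1] D_zero_iff[of qq e] qq_gt1 by (simp add: Zn_simps)

lemma prod_eq_qq: "T \<subseteq> prime_factors n \<Longrightarrow> \<Prod>T = qq \<longleftrightarrow> T = prime_factors n"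
  using prod_inj[of T "prime_factors n"] unfolding qq_def by auto

lemma AIG_verts_char:
  "I \<in> verts (AIG (Zn qq)) \<longleftrightarrow>
     (\<exists>T. T \<subseteq> prime_factors n \<and> T \<noteq> {} \<and> T \<noteq> prime_factors n \<and> I = gen_ideal qq (\<Prod>T))"
proof
  assume "I \<in> verts (AIG (Zn qq))"
  then obtain K where I: "ideal I (Zn qq)" "I \<noteq> {\<zero>\<^bsub>Zn qq\<^esub>}" and K: "ideal K (Zn qq)" "K \<noteq> {\<zero>\<^bsub>Zn qq\<^esub>}"
    and IK: "I \<cdot>\<^bsub>Zn qq\<^esub> K = {\<zero>\<^bsub>Zn qq\<^esub>}" unfolding AIG_simps by blast
  obtain e where e: "e dvd qq" "I = gen_ideal qq e" using I(1) ideals_Zn[OF qq_gt1] gen_ideal_D[OF qq_gt1] by metis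
  obtain e' where e': "e' dvd qq" "K = gen_ideal qq e'" using K(1) ideals_Zn[OF qq_gt1] gen_ideal_D[OF qq_gt1] by metis
  obtain T where T: "T \<subseteq> prime_factors n" "e = \<Prod>T" using dvd_qq_prod[OF e(1)] by blast
  obtain B where B: "B \<subseteq> prime_factors n" "e' = \<Prod>B" using dvd_qq_prod[OF e'(1)] by blast
  have TP: "T \<noteq> prime_factors n" using I(2) e gen_qq_zero T prod_eq_qq by auto
  have BP: "B \<noteq> prime_factors n" using K(2) e' gen_qq_zero B prod_eq_qq by auto
  have "qq dvd e * e'" using IK e e' gen_prod_zero[OF qq_gt1 e(1) e'(1)] by simp
  hence "prime_factors n \<subseteq> T \<union> B" using qq_dvd_iff[OF T(1) B(1)] T(2) B(2) by simp
  hence "T \<noteq> {}" using BP B(1) by auto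
  thus "\<exists>T. T \<subseteq> prime_factors n \<and> T \<noteq> {} \<and> T \<noteq> prime_factors n \<and> I = gen_ideal qq (\<Prod>T)"
    using T TP e by blast
next
  assume "\<exists>T. T \<subseteq> prime_factors n \<and> T \<noteq> {} \<and> T \<noteq> prime_factors n \<and> I = gen_ideal qq (\<Prod>T)"
  then obtain T where T: "T \<subseteq> prime_factors n" "T \<noteq> {}" "T \<noteq> prime_factors n" "I = gen_ideal qq (\<Prod>T)" by blast
  define B where "B = prime_factors n - T"
  have B: "B \<subseteq> prime_factors n" "B \<noteq> prime_factors n" using T(1,2) unfolding B_def by auto
  have dT: "\<Prod>T dvd qq" "\<Prod>B dvd qq" using prod_dvd_qq T(1) B(1) by auto
  have "ideal I (Zn qq)" "ideal (gen_ideal qq (\<Prod>B)) (Zn qq)" using ideal_gen_ideal[OF qq_gt1] T(4) by auto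
  moreover have "I \<noteq> {\<zero>\<^bsub>Zn qq\<^esub>}" using gen_qq_zero[OF dT(1)] prod_eq_qq[OF T(1)] T(3,4) by simp
  moreover have "gen_ideal qq (\<Prod>B) \<noteq> {\<zero>\<^bsub>Zn qq\<^esub>}" using gen_qq_zero[OF dT(2)] prod_eq_qq[OF B(1)] B(2) by simp
  moreover have "I \<cdot>\<^bsub>Zn qq\<^esub> gen_ideal qq (\<Prod>B) = {\<zero>\<^bsub>Zn qq\<^esub>}"
    using gen_prod_zero[OF qq_gt1 dT] qq_dvd_iff[OF T(1) B(1)] T(4) unfolding B_def by auto
  ultimately show "I \<in> verts (AIG (Zn qq))" unfolding AIG_simps by blast
qed

lemma iso3_aux: "graph_iso (Ggraph n) (AIG (Zn qq))"
proof -
  let ?SS = "{S. S \<subseteq> prime_factors n \<and> S \<noteq> {} \<and> S \<noteq> prime_factors n}"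
  define \<phi> where "\<phi> I = gen_ideal qq (\<Prod>(prime_factors n - Xi n I))" for I
  have \<phi>S: "\<phi> (full_power_ideal n S) = gen_ideal qq (\<Prod>(prime_factors n - S))" if "S \<in> ?SS" for S
    unfolding \<phi>_def using Xi_fpi[OF n] that by simp
  have Pd: "\<Prod>(prime_factors n - S) dvd qq" for S by (rule prod_dvd_qq) auto
  have inj: "inj_on \<phi> (verts (Ggraph n))"
  proof (rule inj_onI)
    fix I J assume "I \<in> verts (Ggraph n)" "J \<in> verts (Ggraph n)" and eq: "\<phi> I = \<phi> J"
    then obtain S S' where S: "S \<in> ?SS" "I = full_power_ideal n S" and S': "S' \<in> ?SS" "J = full_power_ideal n S'"
      unfolding verts_Ggraph by blast
    have "gen_ideal qq (\<Prod>(prime_factors n - S)) = gen_ideal qq (\<Prod>(prime_factors n - S'))"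
      using eq \<phi>S[OF S(1)] \<phi>S[OF S'(1)] S(2) S'(2) by simp
    hence "\<Prod>(prime_factors n - S) = \<Prod>(prime_factors n - S')" using gen_inj[OF qq_gt1 Pd Pd] by blast
    hence "prime_factors n - S = prime_factors n - S'"
      using prod_inj[of "prime_factors n - S" "prime_factors n - S'"] by blast
    hence "prime_factors n - (prime_factors n - S) = prime_factors n - (prime_factors n - S')" by simp
    moreover have "prime_factors n - (prime_factors n - S) = S" using S(1) by blast
    moreover have "prime_factors n - (prime_factors n - S') = S'" using S'(1) by blast
    ultimately have "S = S'" by simp
    thus "I = J" using S S' by simp
  qed
  have img: "\<phi> ` verts (Ggraph n) = verts (AIG (Zn qq))"
  proof (intro subset_antisym subsetI)
    fix x assume "x \<in> \<phi> ` verts (Ggraph n)"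
    then obtain S where S: "S \<in> ?SS" "x = \<phi> (full_power_ideal n S)" unfolding verts_Ggraph by blast
    have "x = gen_ideal qq (\<Prod>(prime_factors n - S))" using S \<phi>S by simp
    moreover have "prime_factors n - S \<noteq> {}" "prime_factors n - S \<noteq> prime_factors n" using S(1) by auto
    ultimately show "x \<in> verts (AIG (Zn qq))" unfolding AIG_verts_char by blast
  next
    fix x assume "x \<in> verts (AIG (Zn qq))"
    then obtain T where T: "T \<subseteq> prime_factors n" "T \<noteq> {}" "T \<noteq> prime_factors n" "x = gen_ideal qq (\<Prod>T)"
      unfolding AIG_verts_char by blast
    define S where "S = prime_factors n - T"
    have S: "S \<in> ?SS" using T unfolding S_def by auto
    have "prime_factors n - S = T" using T(1) unfolding S_def by auto
    hence "x = \<phi> (full_power_ideal n S)" using \<phi>S[OF S] T(4) by simp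
    moreover have "full_power_ideal n S \<in> verts (Ggraph n)" using S unfolding verts_Ggraph by blast
    ultimately show "x \<in> \<phi> ` verts (Ggraph n)" by blast
  qed
  have adjp: "adj (Ggraph n) I J \<longleftrightarrow> adj (AIG (Zn qq)) (\<phi> I) (\<phi> J)"
    if IJ: "I \<in> verts (Ggraph n)" "J \<in> verts (Ggraph n)" for I J
  proof -
    obtain S where S: "S \<in> ?SS" "I = full_power_ideal n S" using IJ(1) unfolding verts_Ggraph by blast
    obtain S' where S': "S' \<in> ?SS" "J = full_power_ideal n S'" using IJ(2) unfolding verts_Ggraph by blast
    have Sp: "S \<subseteq> prime_factors n" "S \<noteq> {}" "S \<noteq> prime_factors n" using S(1) by auto
    have Sp': "S' \<subseteq> prime_factors n" "S' \<noteq> {}" "S' \<noteq> prime_factors n" using S'(1) by auto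
    have A: "adj (Ggraph n) I J \<longleftrightarrow> S \<inter> S' = {}" unfolding S(2) S'(2) by (rule adj_Ggraph[OF n Sp Sp'])
    have pI: "\<phi> I = gen_ideal qq (\<Prod>(prime_factors n - S))" using \<phi>S[OF S(1)] S(2) by simp
    have pJ: "\<phi> J = gen_ideal qq (\<Prod>(prime_factors n - S'))" using \<phi>S[OF S'(1)] S'(2) by simp
    have "\<phi> I \<cdot>\<^bsub>Zn qq\<^esub> \<phi> J = {\<zero>\<^bsub>Zn qq\<^esub>} \<longleftrightarrow>
          qq dvd \<Prod>(prime_factors n - S) * \<Prod>(prime_factors n - S')"
      unfolding pI pJ by (rule gen_prod_zero[OF qq_gt1 Pd Pd])
    also have "\<dots> \<longleftrightarrow> prime_factors n \<subseteq> (prime_factors n - S) \<union> (prime_factors n - S')"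
      by (rule qq_dvd_iff) auto
    also have "\<dots> \<longleftrightarrow> S \<inter> S' = {}" using Sp(1) Sp'(1) by blast
    finally have B: "\<phi> I \<cdot>\<^bsub>Zn qq\<^esub> \<phi> J = {\<zero>\<^bsub>Zn qq\<^esub>} \<longleftrightarrow> S \<inter> S' = {}" .
    have C: "\<phi> I \<noteq> \<phi> J" if dis: "S \<inter> S' = {}"
    proof
      assume "\<phi> I = \<phi> J"
      hence "I = J" using inj IJ unfolding inj_on_def by blast
      hence "S = S'" using fpi_inj[OF n Sp(1) Sp'(1)] S(2) S'(2) by simp
      thus False using dis Sp(2) by simp
    qed
    have "adj (AIG (Zn qq)) (\<phi> I) (\<phi> J) \<longleftrightarrow> \<phi> I \<noteq> \<phi> J \<and> \<phi> I \<cdot>\<^bsub>Zn qq\<^esub> \<phi> J = {\<zero>\<^bsub>Zn qq\<^esub>}"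
      by (rule AIG_simps(2))
    thus ?thesis using A B C by blast
  qed
  show ?thesis unfolding graph_iso_def
    by (intro exI[of _ \<phi>] conjI ballI adjp) (simp_all add: bij_betw_def inj img)
qed

end

theorem mainTheorem7:
  fixes n :: nat
  assumes "n > 0"
    and "\<exists>p\<in>prime_factors n. multiplicity p n > 1"
  shows "graph_iso (Egraph n)
           (graph_join (complete_graph ((\<Prod>p\<in>prime_factors n. multiplicity p n) - 1))
              (gen_join (Ggraph n) (\<lambda>I. induced_subgraph (Egraph n) (ideal_class n I))))
       \<and> (\<forall>I\<in>verts (Ggraph n).
            graph_iso (induced_subgraph (Egraph n) (ideal_class n I))
              (edgeless_graph (\<Prod>p\<in>prime_factors n - Xi n I. multiplicity p n)))
       \<and> graph_iso (Ggraph n) (AIG (residue_ring (int (\<Prod>(prime_factors n)))))"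
proof -
  obtain p where p: "p \<in> prime_factors n" using assms(2) by blast
  have "p dvd n" "prime p" using p by auto
  hence "p \<le> n" using assms(1) by (auto simp: dvd_imp_le)
  moreover have "p > 1" using prime_gt_1_nat[OF \<open>prime p\<close>] .
  ultimately have n: "n > 1" by simp
  show ?thesis using iso1[OF n] iso2[OF n] iso3_aux[OF n] unfolding qq_def[OF n] by simp
qed

end
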